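(* Let $n\ge 2$. The function $\mathbf{H}$ is shift-invariant and homogeneous (of order 1): $\mathbf{H}(x_1+r,\dots,x_n+r)=\mathbf{H}(\mathbf{x})+r$ whenever $r\in[-1,1]$, $(x_1+r,\dots,x_n+r)\in[0,1]^n$ and $\mathbf{H}(\mathbf{x})+r\in[0,1]$; and $\mathbf{H}(\lambda x_1,\dots,\lambda x_n)=\lambda\mathbf{H}(\mathbf{x})$ for all $\lambda\in[0,1]$ and $\mathbf{x}\in[0,1]^n$.
   Context: For $\mathbf{x}\in[0,1]^n$ let $x_{(1)}\ge\dots\ge x_{(n)}$ be its entries in decreasing order, and define the median $Med(\mathbf{x})=\frac12(x_{(k)}+x_{(k+1)})$ if $n=2k$ and $Med(\mathbf{x})=x_{(k+1)}$ if $n=2k+1$. Define $f_i(\mathbf{x})=\frac1n$ if $x_1=\dots=x_n$, and otherwise $f_i(\mathbf{x})=\frac{1}{n-1}\Big(1-\frac{|x_i-Med(\mathbf{x})|}{\sum_{j=1}^n|x_j-Med(\mathbf{x})|}\Big)$. Then $\mathbf{H}(\mathbf{x})=\sum_{i=1}^n f_i(\mathbf{x})\,x_i$. *)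

theory Defs
  imports Complex_Main
begin

text \<open>Vectors in [0,1]^n are represented as real lists of length n;
  entry x_i (1-based in the paper) is xs ! (i-1).\<close>

definition ord_stat :: "real list \<Rightarrow> nat \<Rightarrow> real" where
  "ord_stat xs j = rev (sort xs) ! (j - 1)"

definition Med :: "real list \<Rightarrow> real" where
  "Med xs = (let k = length xs div 2 in
     if even (length xs) then (ord_stat xs k + ord_stat xs (k + 1)) / 2
     else ord_stat xs (k + 1))"

definition f_w :: "real list \<Rightarrow> nat \<Rightarrow> real" where
  "f_w xs i = (if (\<forall>j < length xs. xs ! j = xs ! 0) then 1 / real (length xs)
     else (1 / (real (length xs) - 1)) *
          (1 - \<bar>xs ! i - Med xs\<bar> / (\<Sum>j < length xs. \<bar>xs ! j - Med xs\<bar>)))"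

definition H :: "real list \<Rightarrow> real" where
  "H xs = (\<Sum>i < length xs. f_w xs i * xs ! i)"

end

theory Submission
  imports Defs "HOL-Library.Multiset"
begin

lemma sort_map_mono:
  fixes f :: "real \<Rightarrow> real"
  assumes "mono f"
  shows "sort (map f xs) = map f (sort xs)"
proof (rule properties_for_sort)
  show "mset (map f (sort xs)) = mset (map f xs)" by simp
  have "sorted (sort xs)" by simp
  then show "sorted (map f (sort xs))"
    using assms by (intro sorted_map_mono) (auto simp: mono_on_def monoD)
qed

lemma ord_stat_map:
  fixes f :: "real \<Rightarrow> real"
  assumes "mono f" "1 \<le> j" "j \<le> length xs"
  shows "ord_stat (map f xs) j = f (ord_stat xs j)"
  using assms by (simp add: ord_stat_def sort_map_mono rev_map rev_nth)

lemma Med_shift: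
  assumes "length xs \<ge> 1"
  shows "Med (map (\<lambda>x. x + r) xs) = Med xs + r"
proof -
  have m: "mono (\<lambda>x::real. x + r)" by (simp add: mono_def)
  let ?k = "length xs div 2"
  show ?thesis
  proof (cases "even (length xs)")
    case True
    then have "1 \<le> ?k" "?k + 1 \<le> length xs" using assms by auto
    then show ?thesis using True m
      by (simp add: Med_def Let_def ord_stat_map[OF m] field_simps)
  next
    case False
    then have "1 \<le> ?k + 1" "?k + 1 \<le> length xs" using assms by auto
    then show ?thesis using False m
      by (simp add: Med_def Let_def ord_stat_map[OF m])
  qed
qed

lemma Med_scale:
  assumes "length xs \<ge> 1" "l \<ge> 0"
  shows "Med (map (\<lambda>x. l * x) xs) = l * Med xs"
proof -
  have m: "mono (\<lambda>x::real. l * x)" using assms by (simp add: mono_def mult_left_mono)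
  let ?k = "length xs div 2"
  show ?thesis
  proof (cases "even (length xs)")
    case True
    then have "1 \<le> ?k" "?k + 1 \<le> length xs" using assms by auto
    then show ?thesis using True m
      by (simp add: Med_def Let_def ord_stat_map[OF m] add_divide_distrib distrib_left)
  next
    case False
    then have "1 \<le> ?k + 1" "?k + 1 \<le> length xs" using assms by auto
    then show ?thesis using False m
      by (simp add: Med_def Let_def ord_stat_map[OF m])
  qed
qed

lemma sum_f_w:
  assumes "length xs \<ge> 1"
  shows "(\<Sum>i < length xs. f_w xs i) = 1"
proof (cases "\<forall>j < length xs. xs ! j = xs ! 0")
  case True
  then show ?thesis using assms by (cases xs) (auto simp: f_w_def)
next
  case False
  let ?M = "Med xs"
  let ?S = "\<Sum>j < length xs. \<bar>xs ! j - ?M\<bar>"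
  have S: "?S \<noteq> 0"
  proof
    assume "?S = 0"
    then have "\<forall>j\<in>{..<length xs}. \<bar>xs ! j - ?M\<bar> = 0"
      by (subst (asm) sum_nonneg_eq_0_iff) auto
    then have "\<forall>j < length xs. xs ! j = ?M" by auto
    moreover have "0 < length xs" using assms by linarith
    ultimately show False using False by metis
  qed
  from False obtain j where "j < length xs" "xs ! j \<noteq> xs ! 0" by auto
  then have n2: "length xs \<ge> 2" by (cases "j = 0") auto
  have "(\<Sum>i < length xs. f_w xs i) =
     (\<Sum>i < length xs. (1 / (real (length xs) - 1)) * (1 - \<bar>xs ! i - ?M\<bar> / ?S))"
    unfolding f_w_def by (simp only: if_not_P[OF False])
  also have "\<dots> = (1 / (real (length xs) - 1)) * (real (length xs) - ?S / ?S)"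
    by (simp add: sum_distrib_left[symmetric] sum_subtractf sum_divide_distrib[symmetric])
  also have "\<dots> = 1" using S n2 by simp
  finally show ?thesis .
qed

lemma f_w_shift:
  assumes "length xs \<ge> 1" "i < length xs"
  shows "f_w (map (\<lambda>x. x + r) xs) i = f_w xs i"
proof -
  let ?ys = "map (\<lambda>x. x + r) xs"
  have ne: "xs \<noteq> []" using assms by auto
  have c: "(\<forall>j<length ?ys. ?ys ! j = ?ys ! 0) = (\<forall>j<length xs. xs ! j = xs ! 0)"
    using ne by simp
  have d: "\<bar>?ys ! j - Med ?ys\<bar> = \<bar>xs ! j - Med xs\<bar>" if "j < length xs" for j
    using that assms by (simp add: Med_shift)
  have e: "(\<Sum>j<length ?ys. \<bar>?ys ! j - Med ?ys\<bar>) = (\<Sum>j<length xs. \<bar>xs ! j - Med xs\<bar>)"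
    by (rule sum.cong) (simp_all add: Med_shift assms(1))
  have di: "\<bar>?ys ! i - Med ?ys\<bar> = \<bar>xs ! i - Med xs\<bar>" using d[OF assms(2)] .
  show ?thesis
  proof (cases "\<forall>j<length xs. xs ! j = xs ! 0")
    case True
    then show ?thesis unfolding f_w_def c by simp
  next
    case False
    show ?thesis unfolding f_w_def c e di if_not_P[OF False] by simp
  qed
qed

lemma f_w_scale:
  assumes "length xs \<ge> 1" "l > 0" "i < length xs"
  shows "f_w (map (\<lambda>x. l * x) xs) i = f_w xs i"
proof -
  let ?ys = "map (\<lambda>x. l * x) xs"
  have ne: "xs \<noteq> []" using assms by auto
  have c: "(\<forall>j<length ?ys. ?ys ! j = ?ys ! 0) = (\<forall>j<length xs. xs ! j = xs ! 0)"
    using ne assms by simp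
  have d: "\<bar>?ys ! j - Med ?ys\<bar> = l * \<bar>xs ! j - Med xs\<bar>" if "j < length xs" for j
    using that assms by (simp add: Med_scale abs_mult right_diff_distrib[symmetric])
  have e: "(\<Sum>j<length ?ys. \<bar>?ys ! j - Med ?ys\<bar>) = l * (\<Sum>j<length xs. \<bar>xs ! j - Med xs\<bar>)"
    using d by (simp add: sum_distrib_left del: nth_map)
  have di: "\<bar>?ys ! i - Med ?ys\<bar> = l * \<bar>xs ! i - Med xs\<bar>" using d[OF assms(3)] .
  show ?thesis
  proof (cases "\<forall>j<length xs. xs ! j = xs ! 0")
    case True
    then show ?thesis unfolding f_w_def c by simp
  next
    case False
    show ?thesis unfolding f_w_def c e di if_not_P[OF False] using assms(2) by simp
  qed
qed

theorem corollary4: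
  fixes n :: nat and xs :: "real list"
  assumes "n \<ge> 2" and "length xs = n" and "set xs \<subseteq> {0..1}"
  shows "(\<forall>r::real. r \<in> {-1..1} \<longrightarrow> set (map (\<lambda>x. x + r) xs) \<subseteq> {0..1}
            \<longrightarrow> H xs + r \<in> {0..1} \<longrightarrow> H (map (\<lambda>x. x + r) xs) = H xs + r)
       \<and> (\<forall>l::real. l \<in> {0..1} \<longrightarrow> H (map (\<lambda>x. l * x) xs) = l * H xs)"
proof -
  have n1: "length xs \<ge> 1" using assms by simp
  have shift: "H (map (\<lambda>x. x + r) xs) = H xs + r" for r
  proof -
    have "H (map (\<lambda>x. x + r) xs) = (\<Sum>i < length xs. f_w xs i * xs ! i + f_w xs i * r)"
      unfolding H_def using n1 by (simp add: f_w_shift distrib_left)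
    also have "\<dots> = H xs + (\<Sum>i < length xs. f_w xs i) * r"
      by (simp add: H_def sum.distrib sum_distrib_right)
    also have "\<dots> = H xs + r" using sum_f_w[OF n1] by simp
    finally show ?thesis .
  qed
  have scale: "H (map (\<lambda>x. l * x) xs) = l * H xs" if "l \<ge> 0" for l
  proof (cases "l = 0")
    case True
    then show ?thesis by (simp add: H_def)
  next
    case False
    then have "l > 0" using that by simp
    then show ?thesis unfolding H_def using n1
      by (simp add: f_w_scale sum_distrib_left mult_ac)
  qed
  show ?thesis using shift scale by auto
qed

end
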